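(* Let $\varphi\colon \mathbb{R}^n\to\overline{\mathbb{R}}$ be a proper nearly convex function and $\varepsilon\geq 0$. Then for every $\bar x\in \mathrm{ri}(\mathrm{dom}\, \varphi)$, the set $\partial_\varepsilon \varphi(\bar x)$ is nonempty, closed and convex. Furthermore, $$\partial \varphi(\bar x)=\bigcap_{\varepsilon>0} \partial_\varepsilon \varphi(\bar x).$$
   Context: $\overline{\mathbb{R}}=[-\infty,\infty]$; $\varphi$ is proper if $\mathrm{dom}\,\varphi=\{x\mid\varphi(x)<\infty\}\ne\emptyset$ and $\varphi(x)>-\infty$ for all $x$. A set $D$ is nearly convex if there is a convex set $E$ with $E\subset D\subset\overline{E}$; $\varphi$ is nearly convex if $\mathrm{epi}\,\varphi=\{(x,\alpha)\in\mathbb{R}^n\times\mathbb{R}\mid\alpha\ge\varphi(x)\}$ is nearly convex. The relative interior is $\mathrm{ri}\,D=\{a\in D\mid \exists\delta>0,\ B(a;\delta)\cap\mathrm{aff}\,D\subset D\}$. For $\varepsilon\ge0$ and $\bar x\in\mathrm{dom}\,\varphi$, $\partial_\varepsilon\varphi(\bar x)=\{\xi\in\mathbb{R}^n\mid \langle\xi,x-\bar x\rangle-\varepsilon\le\varphi(x)-\varphi(\bar x)\ \forall x\in\mathbb{R}^n\}$, and $\partial\varphi(\bar x)=\partial_0\varphi(\bar x)$. *)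

theory Defs
  imports "HOL-Analysis.Analysis" "HOL-Library.Extended_Real"
begin

definition edom :: "('a \<Rightarrow> ereal) \<Rightarrow> 'a set" where
  "edom \<phi> = {x. \<phi> x < \<infinity>}"

definition proper_fun :: "('a \<Rightarrow> ereal) \<Rightarrow> bool" where
  "proper_fun \<phi> \<longleftrightarrow> edom \<phi> \<noteq> {} \<and> (\<forall>x. \<phi> x > -\<infinity>)"

definition epi :: "('a \<Rightarrow> ereal) \<Rightarrow> ('a \<times> real) set" where
  "epi \<phi> = {(x, \<alpha>). ereal \<alpha> \<ge> \<phi> x}"

definition nearly_convex_set :: "'a::real_normed_vector set \<Rightarrow> bool" where
  "nearly_convex_set D \<longleftrightarrow> (\<exists>E. convex E \<and> E \<subseteq> D \<and> D \<subseteq> closure E)"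

definition nearly_convex_fun :: "('a::real_normed_vector \<Rightarrow> ereal) \<Rightarrow> bool" where
  "nearly_convex_fun \<phi> \<longleftrightarrow> nearly_convex_set (epi \<phi>)"

definition eps_subdiff :: "('a::real_inner \<Rightarrow> ereal) \<Rightarrow> real \<Rightarrow> 'a \<Rightarrow> 'a set" where
  "eps_subdiff \<phi> \<epsilon> xb =
     {\<xi>. \<forall>x. ereal (inner \<xi> (x - xb) - \<epsilon>) \<le> \<phi> x - \<phi> xb}"

definition subdiff :: "('a::real_inner \<Rightarrow> ereal) \<Rightarrow> 'a \<Rightarrow> 'a set" where
  "subdiff \<phi> xb = eps_subdiff \<phi> 0 xb"

end

theory Submission
  imports Defs
begin

lemma fin_dom:
  assumes "proper_fun \<phi>" "x \<in> edom \<phi>"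
  shows "\<phi> x = ereal (real_of_ereal (\<phi> x))"
proof -
  have "\<phi> x \<noteq> \<infinity>" "\<phi> x \<noteq> -\<infinity>" using assms unfolding proper_fun_def edom_def by auto
  then show ?thesis by (cases "\<phi> x") auto
qed

lemma char_sub:
  assumes "proper_fun \<phi>" "xb \<in> edom \<phi>"
  shows "\<xi> \<in> eps_subdiff \<phi> e xb \<longleftrightarrow>
    (\<forall>x\<in>edom \<phi>. \<xi> \<bullet> (x - xb) - e \<le> real_of_ereal (\<phi> x) - real_of_ereal (\<phi> xb))"
proof -
  obtain r2 where r2: "\<phi> xb = ereal r2" using fin_dom[OF assms] by blast
  have pt: "ereal (\<xi> \<bullet> (x - xb) - e) \<le> \<phi> x - \<phi> xb \<longleftrightarrow>
     (x \<in> edom \<phi> \<longrightarrow> \<xi> \<bullet> (x - xb) - e \<le> real_of_ereal (\<phi> x) - real_of_ereal (\<phi> xb))" for x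
  proof (cases "\<phi> x")
    case (real r1)
    then have "x \<in> edom \<phi>" unfolding edom_def by simp
    then show ?thesis using real r2 by simp
  next
    case PInf
    then have "x \<notin> edom \<phi>" unfolding edom_def by simp
    then show ?thesis using PInf r2 by simp
  next
    case MInf
    then show ?thesis using assms(1) unfolding proper_fun_def by auto
  qed
  show ?thesis unfolding eps_subdiff_def mem_Collect_eq
  proof
    assume "\<forall>x. ereal (\<xi> \<bullet> (x - xb) - e) \<le> \<phi> x - \<phi> xb"
    then show "\<forall>x\<in>edom \<phi>. \<xi> \<bullet> (x - xb) - e \<le> real_of_ereal (\<phi> x) - real_of_ereal (\<phi> xb)"
      using pt by blast
  next
    assume "\<forall>x\<in>edom \<phi>. \<xi> \<bullet> (x - xb) - e \<le> real_of_ereal (\<phi> x) - real_of_ereal (\<phi> xb)"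
    then show "\<forall>x. ereal (\<xi> \<bullet> (x - xb) - e) \<le> \<phi> x - \<phi> xb"
      using pt by blast
  qed
qed

lemma aux_lt: "(n::real) \<ge> 0 \<Longrightarrow> n < 2 * (n + 1)"
  by simp

lemma exists_sub:
  fixes \<phi> :: "'a::euclidean_space \<Rightarrow> ereal"
  assumes pr: "proper_fun \<phi>" and nc: "nearly_convex_fun \<phi>"
    and xbri: "xb \<in> rel_interior (edom \<phi>)"
  shows "\<exists>\<xi>. \<forall>x\<in>edom \<phi>. \<xi> \<bullet> (x - xb) \<le> real_of_ereal (\<phi> x) - real_of_ereal (\<phi> xb)"
proof -
  define f where "f = (\<lambda>x. real_of_ereal (\<phi> x))"
  have xbd: "xb \<in> edom \<phi>" using xbri rel_interior_subset by blast
  obtain E where E: "convex E" "E \<subseteq> epi \<phi>" "epi \<phi> \<subseteq> closure E"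
    using nc unfolding nearly_convex_fun_def nearly_convex_set_def by blast
  have epi_iff: "(x, \<alpha>) \<in> epi \<phi> \<longleftrightarrow> f x \<le> \<alpha>" if "x \<in> edom \<phi>" for x \<alpha>
  proof -
    have "\<phi> x = ereal (f x)" unfolding f_def by (rule fin_dom[OF pr that])
    then show ?thesis unfolding epi_def by simp
  qed
  have epi_dom: "x \<in> edom \<phi>" if "(x, \<alpha>) \<in> epi \<phi>" for x \<alpha>
    using that unfolding epi_def edom_def by (auto intro: le_less_trans)
  define p where "p = (xb, f xb)"
  have pE: "p \<in> closure E" using E(3) epi_iff[OF xbd] p_def by auto
  have p1: "(xb, f xb + 1) \<in> closure E" using E(3) epi_iff[OF xbd] by auto
  have pnot: "p \<notin> rel_interior E"
  proof
    assume "p \<in> rel_interior E"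
    then obtain e where e: "e > 0" "ball p e \<inter> affine hull E \<subseteq> E"
      by (auto simp: mem_rel_interior_ball)
    define q where "q = (xb, f xb - e/2)"
    have qeq: "q = (1 + e/2) *\<^sub>R p + (-(e/2)) *\<^sub>R (xb, f xb + 1)"
      by (simp add: p_def q_def algebra_simps)
    have "p \<in> affine hull E" "(xb, f xb + 1) \<in> affine hull E"
      using pE p1 closure_affine_hull by blast+
    then have "q \<in> affine hull E" unfolding qeq
      by (intro mem_affine affine_affine_hull) auto
    moreover have "q \<in> ball p e" using e(1) by (simp add: p_def q_def dist_Pair_Pair dist_real_def)
    ultimately have "q \<in> epi \<phi>" using e(2) E(2) by blast
    then show False using epi_iff[OF xbd] e(1) q_def by simp
  qed
  obtain a where a: "a \<noteq> 0" "\<And>y. y \<in> closure E \<Longrightarrow> a \<bullet> p \<le> a \<bullet> y"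
      "\<And>y. y \<in> rel_interior E \<Longrightarrow> a \<bullet> p < a \<bullet> y"
    using supporting_hyperplane_relative_frontier[OF E(1) pE pnot] by blast
  obtain u s where us: "a = (u, s)" by (cases a)
  have "s \<ge> 0" using a(2)[OF p1] us p_def by (simp add: algebra_simps)
  have key: "u \<bullet> xb + s * f xb \<le> u \<bullet> x + s * f x" if "x \<in> edom \<phi>" for x
  proof -
    have "(x, f x) \<in> closure E" using E(3) epi_iff[OF that] by auto
    from a(2)[OF this] show ?thesis using us p_def by simp
  qed
  have "s \<noteq> 0"
  proof
    assume s0: "s = 0"
    have "E \<noteq> {}" using pE by auto
    then have "rel_interior E \<noteq> {}" using E(1) rel_interior_eq_empty by blast
    then obtain x \<alpha> where y: "(x, \<alpha>) \<in> rel_interior E" by auto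
    then have "(x, \<alpha>) \<in> epi \<phi>" using rel_interior_subset E(2) by blast
    then have xd: "x \<in> edom \<phi>" by (rule epi_dom)
    have lt: "u \<bullet> xb < u \<bullet> x" using a(3)[OF y] us s0 p_def by simp
    obtain e where e: "e > 0" "ball xb e \<inter> affine hull (edom \<phi>) \<subseteq> edom \<phi>"
      using xbri by (auto simp: mem_rel_interior_ball)
    define t where "t = e / (2 * (norm (x - xb) + 1))"
    have hpos: "2 * (norm (x - xb) + 1) > 0" by (intro mult_pos_pos add_nonneg_pos) auto
    then have t0: "t > 0" using e(1) unfolding t_def by (rule divide_pos_pos[rotated])
    define x' where "x' = (1 + t) *\<^sub>R xb + (-t) *\<^sub>R x"
    have x'eq: "x' = xb - t *\<^sub>R (x - xb)" by (simp add: x'_def algebra_simps)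
    have "x' \<in> affine hull (edom \<phi>)" unfolding x'_def
      using xbd xd by (intro mem_affine affine_affine_hull) (auto intro: hull_inc)
    moreover have "dist xb x' < e"
    proof -
      have "dist xb x' = t * norm (x - xb)" by (simp add: x'eq dist_norm t0 less_imp_le)
      also have "\<dots> < t * (2 * (norm (x - xb) + 1))" using t0
        by (intro mult_strict_left_mono aux_lt) auto
      also have "\<dots> = e" using hpos by (simp add: t_def)
      finally show ?thesis .
    qed
    ultimately have "x' \<in> edom \<phi>" using e(2) by auto
    from key[OF this] have "u \<bullet> xb \<le> u \<bullet> x'" using s0 by simp
    then have "t * (u \<bullet> (x - xb)) \<le> 0" by (simp add: x'eq inner_diff_right)
    then have "u \<bullet> (x - xb) \<le> 0" using t0 by (simp add: mult_le_0_iff)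
    then show False using lt by (simp add: inner_diff_right)
  qed
  then have spos: "s > 0" using \<open>s \<ge> 0\<close> by simp
  show ?thesis
  proof (intro exI ballI)
    fix x assume xd: "x \<in> edom \<phi>"
    have "- (u \<bullet> (x - xb)) \<le> s * (f x - f xb)"
      using key[OF xd] by (simp add: inner_diff_right algebra_simps)
    then have "- (u \<bullet> (x - xb)) / s \<le> f x - f xb"
      unfolding pos_divide_le_eq[OF spos] by (simp add: mult.commute)
    then show "(-(1/s) *\<^sub>R u) \<bullet> (x - xb) \<le> real_of_ereal (\<phi> x) - real_of_ereal (\<phi> xb)"
      by (simp add: f_def)
  qed
qed

theorem mainTheorem2:
  fixes \<phi> :: "real^'n \<Rightarrow> ereal" and \<epsilon> :: real and xb :: "real^'n"
  assumes "proper_fun \<phi>" and "nearly_convex_fun \<phi>" and "\<epsilon> \<ge> 0"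
    and "xb \<in> rel_interior (edom \<phi>)"
  shows "eps_subdiff \<phi> \<epsilon> xb \<noteq> {} \<and> closed (eps_subdiff \<phi> \<epsilon> xb)
           \<and> convex (eps_subdiff \<phi> \<epsilon> xb)
         \<and> subdiff \<phi> xb = (\<Inter>e\<in>{e. e > 0}. eps_subdiff \<phi> e xb)"
proof -
  define f where "f = (\<lambda>x. real_of_ereal (\<phi> x))"
  have xbd: "xb \<in> edom \<phi>" using assms(4) rel_interior_subset by blast
  have ch: "\<And>\<xi> e. \<xi> \<in> eps_subdiff \<phi> e xb \<longleftrightarrow> (\<forall>x\<in>edom \<phi>. \<xi> \<bullet> (x - xb) - e \<le> f x - f xb)"
    unfolding f_def by (rule char_sub[OF assms(1) xbd])
  have eq: "eps_subdiff \<phi> e xb = (\<Inter>x\<in>edom \<phi>. {\<xi>. (x - xb) \<bullet> \<xi> \<le> f x - f xb + e})" for e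
  proof -
    have "\<xi> \<in> eps_subdiff \<phi> e xb \<longleftrightarrow> \<xi> \<in> (\<Inter>x\<in>edom \<phi>. {\<xi>. (x - xb) \<bullet> \<xi> \<le> f x - f xb + e})" for \<xi>
      unfolding ch by (auto simp: inner_commute)
    then show ?thesis by blast
  qed
  obtain \<xi> where \<xi>: "\<forall>x\<in>edom \<phi>. \<xi> \<bullet> (x - xb) \<le> f x - f xb"
    using exists_sub[OF assms(1,2,4)] unfolding f_def by blast
  have ne: "\<xi> \<in> eps_subdiff \<phi> \<epsilon> xb" unfolding ch
  proof
    fix x assume "x \<in> edom \<phi>"
    with \<xi> have "\<xi> \<bullet> (x - xb) \<le> f x - f xb" by blast
    then show "\<xi> \<bullet> (x - xb) - \<epsilon> \<le> f x - f xb" using assms(3) by linarith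
  qed
  have cl: "closed (eps_subdiff \<phi> \<epsilon> xb)" unfolding eq
    by (intro closed_INT ballI closed_halfspace_le)
  have cv: "convex (eps_subdiff \<phi> \<epsilon> xb)" unfolding eq
    by (intro convex_INT ballI convex_halfspace_le)
  have "subdiff \<phi> xb = (\<Inter>e\<in>{e. e > 0}. eps_subdiff \<phi> e xb)"
  proof (intro equalityI subsetI)
    fix \<eta> assume "\<eta> \<in> subdiff \<phi> xb"
    then have a: "\<forall>x\<in>edom \<phi>. \<eta> \<bullet> (x - xb) \<le> f x - f xb" unfolding subdiff_def ch by simp
    show "\<eta> \<in> (\<Inter>e\<in>{e. e > 0}. eps_subdiff \<phi> e xb)"
    proof (rule INT_I)
      fix e :: real assume "e \<in> {e. e > 0}"
      then have e0: "e > 0" by simp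
      show "\<eta> \<in> eps_subdiff \<phi> e xb" unfolding ch
      proof
        fix x assume "x \<in> edom \<phi>"
        with a have "\<eta> \<bullet> (x - xb) \<le> f x - f xb" by blast
        then show "\<eta> \<bullet> (x - xb) - e \<le> f x - f xb" using e0 by linarith
      qed
    qed
  next
    fix \<eta> assume h: "\<eta> \<in> (\<Inter>e\<in>{e. e > 0}. eps_subdiff \<phi> e xb)"
    show "\<eta> \<in> subdiff \<phi> xb" unfolding subdiff_def ch
    proof
      fix x assume "x \<in> edom \<phi>"
      have "\<eta> \<bullet> (x - xb) \<le> f x - f xb + e" if "e > 0" for e
      proof -
        have "\<eta> \<in> eps_subdiff \<phi> e xb" using h that by blast
        then have "\<eta> \<bullet> (x - xb) - e \<le> f x - f xb" unfolding ch using \<open>x \<in> edom \<phi>\<close> by blast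
        then show ?thesis by linarith
      qed
      then have "\<eta> \<bullet> (x - xb) \<le> f x - f xb" by (rule field_le_epsilon)
      then show "\<eta> \<bullet> (x - xb) - 0 \<le> f x - f xb" by simp
    qed
  qed
  then show ?thesis using ne cl cv by blast
qed

end
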